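(* Let $t_0\ge0$ and $h>0$, and let $$P(t_0,h)=\int_{-\infty}^{\infty}\left|\Gamma\left(\frac{3+it}2\right)\right|\exp\left(\frac{\pi t}4\right)\exp\left(-\frac{(t-t_0)^2}{2h^2}\right)dt.$$ Then $$P(t_0,h)\le h\pi\left(t_0+\frac h{\sqrt{2\pi}}+1+\frac1{2\sqrt2}\right).$$
   Context: $\Gamma$ is Euler's Gamma function. *)

theory Defs
  imports "HOL-Analysis.Analysis"
begin

definition P :: "real \<Rightarrow> real \<Rightarrow> real" where
  "P t0 h = integral UNIV (\<lambda>t::real.
     norm (Gamma (Complex (3/2) (t/2))) * exp (pi * t / 4) * exp (- ((t - t0)^2) / (2 * h^2)))"

end

theory Submission
  imports Defs "HOL-Probability.Probability"
begin

lemma sin_half: "sin (of_real pi * Complex (1/2) (t/2)) = of_real ((exp (pi*t/2) + exp (-(pi*t/2)))/2)"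
proof -
  have "Re (of_real pi * Complex (1/2) (t/2)) = pi/2" "Im (of_real pi * Complex (1/2) (t/2)) = pi*t/2"
    by simp_all
  then show ?thesis by (simp add: complex_eq_iff Re_sin Im_sin)
qed

lemma Gamma_half_sq: "(norm (Gamma (Complex (1/2) (t/2))))^2 = 2*pi / (exp (pi*t/2) + exp (-(pi*t/2)))"
proof -
  define z where "z = Complex (1/2) (t/2)"
  have c: "cnj z = 1 - z" by (simp add: z_def complex_eq_iff)
  have "of_real ((norm (Gamma z))^2) = Gamma z * cnj (Gamma z)"
    by (metis complex_norm_square of_real_power)
  also have "\<dots> = of_real pi / sin (of_real pi * z)"
    by (simp add: cnj_Gamma c Gamma_reflection_complex)
  also have "\<dots> = of_real (2*pi / (exp (pi*t/2) + exp (-(pi*t/2))))"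
    unfolding z_def sin_half by simp
  finally show ?thesis unfolding z_def of_real_eq_iff .
qed

lemma Gamma_3half_sq: "(norm (Gamma (Complex (3/2) (t/2))))^2 = (1+t^2)/4 * (2*pi / (exp (pi*t/2) + exp (-(pi*t/2))))"
proof -
  define z where "z = Complex (1/2) (t/2)"
  have nz: "z \<notin> \<int>\<^sub>\<le>\<^sub>0"
  proof
    assume "z \<in> \<int>\<^sub>\<le>\<^sub>0"
    then obtain n where "z = of_int n" "n \<le> 0" by (auto elim!: nonpos_Ints_cases)
    then have "Re z = of_int n" by simp
    then show False using \<open>n \<le> 0\<close> by (simp add: z_def)
  qed
  have "Complex (3/2) (t/2) = z + 1" by (simp add: z_def complex_eq_iff)
  then have "Gamma (Complex (3/2) (t/2)) = z * Gamma z" using Gamma_plus1[OF nz] by simp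
  then have "(norm (Gamma (Complex (3/2) (t/2))))^2 = (norm z)^2 * (norm (Gamma z))^2"
    by (simp add: norm_mult power_mult_distrib)
  also have "(norm z)^2 = (1+t^2)/4" by (simp add: z_def cmod_power2 power_divide field_simps)
  finally show ?thesis using Gamma_half_sq[of t] by (simp add: z_def)
qed

lemma pw_bound: "norm (Gamma (Complex (3/2) (t/2))) * exp (pi * t / 4) \<le> sqrt (pi/2) * (max t 0 + 1)"
proof -
  define a where "a = pi*t/2"
  have ea: "exp (pi*t/4) ^ 2 = exp a" by (simp add: a_def flip: exp_double; simp add: field_simps)
  have key: "(1+t^2) * exp a \<le> (max t 0 + 1)^2 * (exp a + exp (-a))"
  proof (cases "t \<ge> 0")
    case True
    have "1 + t^2 \<le> (max t 0 + 1)^2" using True by (simp add: power2_eq_square algebra_simps)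
    moreover have "exp a \<le> exp a + exp (-a)" by simp
    ultimately show ?thesis by (intro mult_mono) auto
  next
    case False
    have "(-t)*1 \<le> (-t)*(pi/2)" using False pi_gt3 by (intro mult_left_mono) auto
    then have "-t \<le> -a" unfolding a_def by (simp add: mult.commute)
    also have "\<dots> \<le> exp (-a)" using exp_ge_add_one_self[of "-a"] by linarith
    finally have "(-t)^2 \<le> exp (-a)^2" using False by (intro power_mono) auto
    then have "t^2 * exp a \<le> exp (-a)^2 * exp a" by (simp add: mult_right_mono)
    also have "exp (-a)^2 * exp a = exp (-a)" by (simp add: power2_eq_square exp_minus field_simps)
    finally have "t^2 * exp a \<le> exp (-a)" .
    then show ?thesis using False by (simp add: algebra_simps)
  qed
  have pos: "exp a + exp (-a) > 0" by (simp add: add_pos_pos)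
  have "(norm (Gamma (Complex (3/2) (t/2))) * exp (pi * t / 4))^2
        = (1+t^2)/4 * (2*pi / (exp a + exp (-a))) * exp a"
    by (simp add: power_mult_distrib Gamma_3half_sq ea a_def)
  also have "\<dots> = pi/2 * ((1+t^2) * exp a / (exp a + exp (-a)))" using pos by (simp add: field_simps)
  also have "\<dots> \<le> pi/2 * (max t 0 + 1)^2"
    using key pos by (intro mult_left_mono) (simp_all add: divide_le_eq)
  also have "\<dots> = (sqrt (pi/2) * (max t 0 + 1))^2" by (simp add: power_mult_distrib)
  finally show ?thesis
    by (rule power2_le_imp_le) (simp)
qed

theorem lemma6p5:
  fixes t0 h :: real
  assumes "t0 \<ge> 0" and "h > 0"
  shows "P t0 h \<le> h * pi * (t0 + h / sqrt (2 * pi) + 1 + 1 / (2 * sqrt 2))"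
proof -
  define F where "F t = norm (Gamma (Complex (3/2) (t/2))) * exp (pi * t / 4) * exp (- ((t - t0)^2) / (2 * h^2))" for t
  define nd where "nd = normal_density t0 h"
  define g where "g t = pi*h*(t0+1) * nd t + pi*h/2 * (nd t * \<bar>t-t0\<bar>^(2*0+1)) + pi*h/2 * (nd t * (t-t0)^(2*0+1))" for t
  define I where "I = pi*h*(t0+1) * 1 + pi*h/2 * (2 ^ 0 * h ^ (2 * 0 + 1) * fact 0 * sqrt (2 / pi)) + pi*h/2 * 0"
  have gi: "has_bochner_integral lborel g I"
  proof -
    have h1: "has_bochner_integral lborel nd 1"
      unfolding nd_def using assms by (simp add: has_bochner_integral_iff)
    have h2: "has_bochner_integral lborel (\<lambda>t. nd t * \<bar>t-t0\<bar>^(2*0+1)) (2 ^ 0 * h ^ (2 * 0 + 1) * fact 0 * sqrt (2 / pi))"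
      unfolding nd_def using normal_moment_abs_odd[where \<sigma>=h and k=0 and \<mu>=t0] assms by simp
    have h3: "has_bochner_integral lborel (\<lambda>t. nd t * (t-t0)^(2*0+1)) 0"
      unfolding nd_def using normal_moment_odd[where \<sigma>=h and k=0 and \<mu>=t0] assms by simp
    show ?thesis unfolding g_def I_def
      by (intro has_bochner_integral_add has_bochner_integral_mult_right h1 h2 h3)
  qed
  have gauss: "exp (- ((t - t0)^2) / (2 * h^2)) = sqrt (2*pi) * h * nd t" for t
    using assms by (simp add: nd_def normal_density_def real_sqrt_mult)
  have sq: "sqrt (pi/2) * sqrt (2*pi) = pi"
    by (simp add: real_sqrt_mult[symmetric])
  have Fle: "F t \<le> g t" for t
  proof -
    have ndp: "nd t \<ge> 0" by (simp add: nd_def)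
    have "F t = norm (Gamma (Complex (3/2) (t/2))) * exp (pi * t / 4) * (sqrt (2*pi) * h * nd t)"
      by (simp only: F_def gauss)
    also have "\<dots> \<le> sqrt (pi/2) * (max t 0 + 1) * (sqrt (2*pi) * h * nd t)"
      using assms ndp by (intro mult_right_mono pw_bound) auto
    also have "\<dots> = pi*h*nd t * (max t 0 + 1)" using sq by (simp add: algebra_simps)
    also have "\<dots> \<le> pi*h*nd t * (t0 + 1 + (\<bar>t-t0\<bar> + (t-t0))/2)"
      using assms ndp by (intro mult_left_mono) (auto simp: abs_if field_simps)
    also have "\<dots> = g t" by (simp add: g_def field_simps)
    finally show ?thesis .
  qed
  have Fnn: "F t \<ge> 0" for t by (simp add: F_def)
  have Fc: "continuous_on UNIV F"
  proof -
    have "isCont (\<lambda>t. Gamma (Complex (3/2) (t/2))) t" for t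
    proof -
      have c1: "isCont (\<lambda>t. Complex (3/2) (t/2)) t" unfolding Complex_eq by (intro continuous_intros) auto
      have c2: "Complex (3/2) (t/2) \<notin> \<int>\<^sub>\<le>\<^sub>0"
      proof -
        show "Complex (3/2) (t/2) \<notin> \<int>\<^sub>\<le>\<^sub>0"
        proof
          assume "Complex (3/2) (t/2) \<in> \<int>\<^sub>\<le>\<^sub>0"
          then obtain n where "Complex (3/2) (t/2) = of_int n" "n \<le> 0" by (auto elim!: nonpos_Ints_cases)
          then have "Re (Complex (3/2) (t/2)) = of_int n" by simp
          then show False using \<open>n \<le> 0\<close> by simp
        qed
      qed
      show ?thesis using isCont_Gamma[OF c1] c2 by simp
    qed
    note G = this
    have "isCont F t" for t
    proof -
      have a: "isCont (\<lambda>t. norm (Gamma (Complex (3/2) (t/2)))) t" by (rule isCont_norm[OF G])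
      have b: "isCont (\<lambda>t. exp (pi * t / 4) * exp (- ((t - t0)^2) / (2 * h^2))) t"
        using assms by (intro continuous_intros) auto
      have "isCont (\<lambda>t. norm (Gamma (Complex (3/2) (t/2))) * (exp (pi * t / 4) * exp (- ((t - t0)^2) / (2 * h^2)))) t"
        by (rule isCont_mult[OF a b])
      then show ?thesis unfolding F_def by (simp add: mult.assoc)
    qed
    then show ?thesis by (simp add: continuous_at_imp_continuous_on)
  qed
  have gint: "integrable lborel g" using gi by (rule integrable.intros)
  have Fint: "integrable lborel F"
    by (rule Bochner_Integration.integrable_bound[OF gint]) (use Fc Fle Fnn in \<open>auto intro!: borel_measurable_continuous_onI AE_I2 order_trans[OF Fle abs_ge_self]\<close>)
  have "P t0 h = integral\<^sup>L lborel F"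
    unfolding P_def F_def[symmetric] by (rule integral_lborel[OF Fint])
  also have "\<dots> \<le> integral\<^sup>L lborel g"
    by (rule integral_mono[OF Fint gint Fle])
  also have "\<dots> = I" using gi by (rule has_bochner_integral_integral_eq)
  also have "I \<le> h * pi * (t0 + h / sqrt (2 * pi) + 1 + 1 / (2 * sqrt 2))"
  proof -
    have s2: "sqrt 2 * sqrt 2 = 2" by simp
    have e: "sqrt (2/pi) / 2 = 1 / sqrt (2*pi)"
      by (simp add: real_sqrt_divide real_sqrt_mult field_simps s2)
    have "I = pi*h*(t0+1) + h*pi*h*(sqrt(2/pi)/2)" unfolding I_def by (simp add: algebra_simps)
    then have "I = h*pi*(t0 + h / sqrt (2*pi) + 1)" unfolding e by (simp add: algebra_simps)
    then show ?thesis using assms by (simp add: mult_left_mono)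
  qed
  finally show ?thesis .
qed

end
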